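(* Let $c \in (0,1/2]$, $t_1 \in [0,1-2c]$, $t_2 \in [t_1+c,1-c]$, and let $p,q \in (0,1)$ with $p \neq q$. Let $F$, $\Lambda_{p,q}$ and $\gamma_r$ be as described in the context. Then for every $r \in \Lambda_{p,q}$, \[ \left(\int_{F \times F} |x-y|^2 \, d\gamma_r(x,y)\right)^{1/2} \;=\; \frac{t_2-t_1}{1-c}\sqrt{\frac{2c(p-q)^2+(1-c)(p+q-2r)}{1+c}}. \]
   Context: Let $S_1(x)=cx+t_1$ and $S_2(x)=cx+t_2$ on $[0,1]$. Let $F\subseteq[0,1]$ be the unique nonempty compact set with $F=S_1(F)\cup S_2(F)$. For $p\in(0,1)$, $\mu_p$ is the unique Borel probability measure with $\mu_p = p\,\mu_p\circ S_1^{-1} + (1-p)\,\mu_p\circ S_2^{-1}$. On $[0,1]^2$ define $S_{i,j}(x,y)=(S_i(x),S_j(y))$ for $i,j\in\{1,2\}$. Let $\Lambda_{p,q}$ be the open interval $\max\{0,p+q-1\}<r<\min\{p,q\}$. For $r\in\Lambda_{p,q}$, $\gamma_r$ is the unique Borel probability measure on $[0,1]^2$ satisfying $\gamma_r = r\,\gamma_r\circ S_{1,1}^{-1} + (p-r)\,\gamma_r\circ S_{1,2}^{-1} + (q-r)\,\gamma_r\circ S_{2,1}^{-1} + (1-p-q+r)\,\gamma_r\circ S_{2,2}^{-1}$; it is supported on $F\times F$ and is a coupling of $\mu_p$ and $\mu_q$. *)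

theory Defs
  imports "HOL-Probability.Probability"
begin

definition sim :: "real \<Rightarrow> real \<Rightarrow> real \<Rightarrow> real" where
  "sim c t x = c * x + t"

definition is_attractor :: "real \<Rightarrow> real \<Rightarrow> real \<Rightarrow> real set \<Rightarrow> bool" where
  "is_attractor c t1 t2 F \<longleftrightarrow>
     F \<noteq> {} \<and> compact F \<and> F \<subseteq> {0..1} \<and> F = sim c t1 ` F \<union> sim c t2 ` F"

definition Lambda :: "real \<Rightarrow> real \<Rightarrow> real set" where
  "Lambda p q = {max 0 (p + q - 1) <..< min p q}"

definition is_gamma ::
  "real \<Rightarrow> real \<Rightarrow> real \<Rightarrow> real \<Rightarrow> real \<Rightarrow> real \<Rightarrow> (real \<times> real) measure \<Rightarrow> bool" where
  "is_gamma c t1 t2 p q r \<gamma> \<longleftrightarrow>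
     sets \<gamma> = sets borel \<and> prob_space \<gamma> \<and> emeasure \<gamma> ({0..1} \<times> {0..1}) = 1 \<and>
     (\<forall>A \<in> sets borel.
        emeasure \<gamma> A =
          ennreal r * emeasure \<gamma> ((\<lambda>(x, y). (sim c t1 x, sim c t1 y)) -` A)
        + ennreal (p - r) * emeasure \<gamma> ((\<lambda>(x, y). (sim c t1 x, sim c t2 y)) -` A)
        + ennreal (q - r) * emeasure \<gamma> ((\<lambda>(x, y). (sim c t2 x, sim c t1 y)) -` A)
        + ennreal (1 - p - q + r) * emeasure \<gamma> ((\<lambda>(x, y). (sim c t2 x, sim c t2 y)) -` A))"

end

theory Submission
  imports Defs
begin

lemma ennr4: fixes w1 w2 w3 w4 x1 x2 x3 x4 :: real
  assumes "0\<le>w1" "0\<le>w2" "0\<le>w3" "0\<le>w4" "0\<le>x1" "0\<le>x2" "0\<le>x3" "0\<le>x4"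
  shows "ennreal w1 * ennreal x1 + ennreal w2 * ennreal x2 + ennreal w3*ennreal x3 + ennreal w4*ennreal x4
     = ennreal (w1*x1+w2*x2+w3*x3+w4*x4)"
  using assms by (simp add: ennreal_mult ennreal_plus)

locale gs =
  fixes c t1 t2 p q r :: real and \<gamma> :: "(real \<times> real) measure"
  assumes c0: "0 < c" and c1: "c \<le> 1/2"
    and t1a: "0 \<le> t1" and t1b: "t1 \<le> 1 - 2*c"
    and t2a: "t1 + c \<le> t2" and t2b: "t2 \<le> 1 - c"
    and r0: "0 < r" and rp: "r < p" and rq: "r < q" and rpq: "p + q - 1 < r"
    and G: "is_gamma c t1 t2 p q r \<gamma>"
begin

definition T :: "real \<Rightarrow> real \<Rightarrow> real \<times> real \<Rightarrow> real \<times> real" where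
  "T a b = (\<lambda>(x, y). (sim c a x, sim c b y))"

lemma sets_g[simp, measurable_cong]: "sets \<gamma> = sets borel" using G by (simp add: is_gamma_def)
lemma space_g[simp]: "space \<gamma> = UNIV" using sets_eq_imp_space_eq[OF sets_g] by simp
lemma ps: "prob_space \<gamma>" using G by (simp add: is_gamma_def)

lemma T_meas[measurable]: "T a b \<in> borel_measurable borel"
proof -
  have "T a b = (\<lambda>z. (c * fst z + a, c * snd z + b))"
    by (auto simp: T_def sim_def split_beta)
  then show ?thesis by (simp only:) (intro borel_measurable_continuous_onI continuous_intros)
qed

lemma T_meas'[measurable]: "T a b \<in> measurable \<gamma> \<gamma>"
  using T_meas by (simp add: measurable_def)

lemma eqA: "A \<in> sets borel \<Longrightarrow> emeasure \<gamma> A =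
          ennreal r * emeasure \<gamma> (T t1 t1 -` A)
        + ennreal (p - r) * emeasure \<gamma> (T t1 t2 -` A)
        + ennreal (q - r) * emeasure \<gamma> (T t2 t1 -` A)
        + ennreal (1 - p - q + r) * emeasure \<gamma> (T t2 t2 -` A)"
  using G unfolding is_gamma_def T_def by blast

lemma nn_eq:
  assumes u: "u \<in> borel_measurable \<gamma>"
  shows "integral\<^sup>N \<gamma> u =
          ennreal r * (\<integral>\<^sup>+z. u (T t1 t1 z) \<partial>\<gamma>)
        + ennreal (p - r) * (\<integral>\<^sup>+z. u (T t1 t2 z) \<partial>\<gamma>)
        + ennreal (q - r) * (\<integral>\<^sup>+z. u (T t2 t1 z) \<partial>\<gamma>)
        + ennreal (1 - p - q + r) * (\<integral>\<^sup>+z. u (T t2 t2 z) \<partial>\<gamma>)"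
  using u
proof induct
  case (cong f g)
  then have "f = g" by auto
  then show ?case using cong by simp
next
  case (set A)
  have *: "\<And>a b. (\<integral>\<^sup>+z. indicator A (T a b z) \<partial>\<gamma>) = emeasure \<gamma> (T a b -` A)"
  proof -
    fix a b
    have "(\<lambda>z. indicator A (T a b z) :: ennreal) = indicator (T a b -` A)"
      by (auto simp: indicator_def)
    moreover have "T a b -` A \<in> sets \<gamma>"
      using measurable_sets[OF T_meas' set] by simp
    ultimately show "(\<integral>\<^sup>+z. indicator A (T a b z) \<partial>\<gamma>) = emeasure \<gamma> (T a b -` A)"
      by simp
  qed
  show ?case using set by (simp add: * eqA)
next
  case (mult u k)
  have m: "\<And>a b. (\<lambda>z. u (T a b z)) \<in> borel_measurable \<gamma>" using mult by measurable
  have e: "\<And>a b. (\<integral>\<^sup>+z. k * u (T a b z) \<partial>\<gamma>) = k * (\<integral>\<^sup>+z. u (T a b z) \<partial>\<gamma>)"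
    using m by (rule nn_integral_cmult)
  have e0: "(\<integral>\<^sup>+z. k * u z \<partial>\<gamma>) = k * integral\<^sup>N \<gamma> u"
    using mult by (intro nn_integral_cmult) auto
  show ?case unfolding e e0 mult(4) by (simp only: distrib_left mult.left_commute)
next
  case (add u v)
  have m: "\<And>a b. (\<lambda>z. u (T a b z)) \<in> borel_measurable \<gamma>" "\<And>a b. (\<lambda>z. v (T a b z)) \<in> borel_measurable \<gamma>"
    using measurable_compose[OF T_meas' add(1)] measurable_compose[OF T_meas' add(4)] by auto
  have e: "\<And>a b. (\<integral>\<^sup>+z. v (T a b z) + u (T a b z) \<partial>\<gamma>) = (\<integral>\<^sup>+z. v (T a b z) \<partial>\<gamma>) + (\<integral>\<^sup>+z. u (T a b z) \<partial>\<gamma>)"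
    using m by (intro nn_integral_add) auto
  have e0: "(\<integral>\<^sup>+z. v z + u z \<partial>\<gamma>) = integral\<^sup>N \<gamma> v + integral\<^sup>N \<gamma> u"
    using add(1,4) by (intro nn_integral_add) auto
  show ?case unfolding e e0 add(3) add(7) by (simp only: distrib_left add_ac)
next
  case (seq U)
  have m: "\<And>a b i. (\<lambda>z. U i (T a b z)) \<in> borel_measurable \<gamma>"
    using measurable_compose[OF T_meas' seq(1)] by auto
  have le: "\<And>m n z. m \<le> n \<Longrightarrow> U m z \<le> U n z" using seq(4) unfolding incseq_def le_fun_def by blast
  have inc: "\<And>a b. incseq (\<lambda>i. \<integral>\<^sup>+z. U i (T a b z) \<partial>\<gamma>)"
    by (auto simp: incseq_def intro!: nn_integral_mono le)
  have inc0: "incseq (\<lambda>i. integral\<^sup>N \<gamma> (U i))"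
    by (auto simp: incseq_def intro!: nn_integral_mono le)
  have incT: "\<And>a b. incseq (\<lambda>i z. U i (T a b z))"
    by (auto simp: incseq_def le_fun_def intro!: le)
  have S: "\<And>a b. (\<integral>\<^sup>+z. (SUP i. U i) (T a b z) \<partial>\<gamma>) = (SUP i. \<integral>\<^sup>+z. U i (T a b z) \<partial>\<gamma>)"
    unfolding SUP_apply by (rule nn_integral_monotone_convergence_SUP[OF incT m])
  have S0: "integral\<^sup>N \<gamma> (SUP i. U i) = (SUP i. integral\<^sup>N \<gamma> (U i))"
  proof -
    have "(SUP i. U i) = (\<lambda>x. SUP i. U i x)" by (rule ext) (rule SUP_apply)
    then show ?thesis using nn_integral_monotone_convergence_SUP[OF seq(4) seq(1)] by (simp only:)
  qed
  have incm: "\<And>k a b. incseq (\<lambda>i. k * (\<integral>\<^sup>+z. U i (T a b z) \<partial>\<gamma>) :: ennreal)"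
    using inc by (auto simp: incseq_def intro: mult_left_mono)
  have incs: "\<And>f g. incseq f \<Longrightarrow> incseq g \<Longrightarrow> incseq (\<lambda>i. f i + g i :: ennreal)"
    by (auto simp: incseq_def intro: add_mono)
  define a1 where "a1 i = ennreal r * (\<integral>\<^sup>+z. U i (T t1 t1 z) \<partial>\<gamma>)" for i
  define a2 where "a2 i = ennreal (p - r) * (\<integral>\<^sup>+z. U i (T t1 t2 z) \<partial>\<gamma>)" for i
  define a3 where "a3 i = ennreal (q - r) * (\<integral>\<^sup>+z. U i (T t2 t1 z) \<partial>\<gamma>)" for i
  define a4 where "a4 i = ennreal (1 - p - q + r) * (\<integral>\<^sup>+z. U i (T t2 t2 z) \<partial>\<gamma>)" for i
  have i1: "incseq a1" unfolding a1_def by (rule incm)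
  have i2: "incseq a2" unfolding a2_def by (rule incm)
  have i3: "incseq a3" unfolding a3_def by (rule incm)
  have i4: "incseq a4" unfolding a4_def by (rule incm)
  have IH: "\<And>i. integral\<^sup>N \<gamma> (U i) = a1 i + a2 i + a3 i + a4 i"
    unfolding a1_def a2_def a3_def a4_def by (rule seq(3))
  have "(SUP i. a1 i) + (SUP i. a2 i) + (SUP i. a3 i) + (SUP i. a4 i)
      = (SUP i. a1 i + a2 i + a3 i + a4 i)"
    by (simp only: ennreal_SUP_add[OF i1 i2, symmetric] ennreal_SUP_add[OF incs[OF i1 i2] i3, symmetric]
      ennreal_SUP_add[OF incs[OF incs[OF i1 i2] i3] i4, symmetric])
  then show ?case
    unfolding S S0 SUP_mult_left_ennreal IH
    by (simp only: a1_def a2_def a3_def a4_def)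
qed


definition box :: "(real \<times> real) set" where "box = {0..1} \<times> {0..1}"

lemma box_meas[measurable]: "box \<in> sets borel"
  unfolding box_def by (intro borel_closed closed_Times) auto

lemma mg: "f \<in> borel_measurable borel \<Longrightarrow> f \<in> borel_measurable \<gamma>"
  using measurable_cong_sets[OF sets_g refl] by simp

lemma AE_box: "AE z in \<gamma>. z \<in> box"
proof -
  interpret prob_space \<gamma> by (rule ps)
  have "emeasure \<gamma> box = 1" using G by (simp add: is_gamma_def box_def)
  then have "prob box = 1" by (simp add: emeasure_eq_measure)
  then show ?thesis using AE_in_set_eq_1[of box] by simp
qed

lemma T_fst[simp]: "fst (T a b z) = c * fst z + a" and T_snd[simp]: "snd (T a b z) = c * snd z + b"
  by (auto simp: T_def sim_def split_beta)

lemma T_box: assumes "z \<in> box" "a \<in> {t1, t2}" "b \<in> {t1, t2}" shows "T a b z \<in> box"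
proof -
  have "0 \<le> fst z" "fst z \<le> 1" "0 \<le> snd z" "snd z \<le> 1" using assms(1) by (auto simp: box_def)
  then have h1: "c * fst z \<le> c" "c * snd z \<le> c" "0 \<le> c * fst z" "0 \<le> c * snd z"
    using c0 mult_left_mono[of "fst z" 1 c] mult_left_mono[of "snd z" 1 c] by auto
  have e: "T a b z = (c * fst z + a, c * snd z + b)" by (simp add: prod_eq_iff)
  have h2: "0 \<le> a" "a \<le> 1-c" "0 \<le> b" "b \<le> 1-c" using assms(2,3) t1a t1b t2a t2b c0 by auto
  show ?thesis unfolding e box_def mem_Times_iff fst_conv snd_conv atLeastAtMost_iff
    using h1 h2 by linarith
qed

lemma integ: fixes B :: real assumes "f \<in> borel_measurable borel" "\<And>z. z \<in> box \<Longrightarrow> \<bar>f z\<bar> \<le> B"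
  shows "integrable \<gamma> f"
proof -
  interpret prob_space \<gamma> by (rule ps)
  show ?thesis
    by (rule integrable_const_bound[where B=B]) (use AE_box assms mg in auto)
qed

lemma nnint: fixes B :: real assumes "h \<in> borel_measurable borel" "\<And>z. 0 \<le> h z" "\<And>z. h z \<le> B"
  shows "(\<integral>\<^sup>+z. ennreal (h z) \<partial>\<gamma>) = ennreal (integral\<^sup>L \<gamma> h)"
proof -
  have "integrable \<gamma> h" by (rule integ[where B=B]) (use assms in auto)
  then show ?thesis using assms by (intro nn_integral_eq_integral) auto
qed

lemma real_eq:
  assumes f[measurable]: "f \<in> borel_measurable borel" and b: "\<And>z. z \<in> box \<Longrightarrow> 0 \<le> f z \<and> f z \<le> B"
  shows "integral\<^sup>L \<gamma> f = r * integral\<^sup>L \<gamma> (\<lambda>z. f (T t1 t1 z)) + (p - r) * integral\<^sup>L \<gamma> (\<lambda>z. f (T t1 t2 z))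
     + (q - r) * integral\<^sup>L \<gamma> (\<lambda>z. f (T t2 t1 z)) + (1 - p - q + r) * integral\<^sup>L \<gamma> (\<lambda>z. f (T t2 t2 z))"
proof -
  define g where "g z = (if z \<in> box then f z else 0)" for z
  have gm[measurable]: "g \<in> borel_measurable borel" unfolding g_def by measurable
  have g0: "\<And>z. 0 \<le> g z" and gB: "\<And>z. g z \<le> max B 0" using b by (auto simp: g_def le_max_iff_disj)
  have gTm: "\<And>a b. (\<lambda>z. g (T a b z)) \<in> borel_measurable borel" by measurable
  have n0: "(\<integral>\<^sup>+z. ennreal (g z) \<partial>\<gamma>) = ennreal (integral\<^sup>L \<gamma> g)"
    by (rule nnint[OF gm g0 gB])
  have nT: "\<And>a b. (\<integral>\<^sup>+z. ennreal (g (T a b z)) \<partial>\<gamma>) = ennreal (integral\<^sup>L \<gamma> (\<lambda>z. g (T a b z)))"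
    by (rule nnint[OF gTm g0 gB])
  have i0: "integral\<^sup>L \<gamma> g = integral\<^sup>L \<gamma> f"
    by (rule integral_cong_AE) (use AE_box in \<open>auto simp: g_def intro: mg\<close>)
  have iT: "\<And>a b. a \<in> {t1,t2} \<Longrightarrow> b \<in> {t1,t2} \<Longrightarrow> integral\<^sup>L \<gamma> (\<lambda>z. g (T a b z)) = integral\<^sup>L \<gamma> (\<lambda>z. f (T a b z))"
    by (rule integral_cong_AE) (use AE_box T_box in \<open>auto simp: g_def intro!: mg gTm\<close>)
  have nn: "integral\<^sup>N \<gamma> (\<lambda>z. ennreal (g z)) =
          ennreal r * (\<integral>\<^sup>+z. ennreal (g (T t1 t1 z)) \<partial>\<gamma>)
        + ennreal (p - r) * (\<integral>\<^sup>+z. ennreal (g (T t1 t2 z)) \<partial>\<gamma>)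
        + ennreal (q - r) * (\<integral>\<^sup>+z. ennreal (g (T t2 t1 z)) \<partial>\<gamma>)
        + ennreal (1 - p - q + r) * (\<integral>\<^sup>+z. ennreal (g (T t2 t2 z)) \<partial>\<gamma>)"
    by (rule nn_eq) (intro mg, measurable)
  have pos: "0 \<le> integral\<^sup>L \<gamma> (\<lambda>z. f (T a b z))" if "a \<in> {t1,t2}" "b \<in> {t1,t2}" for a b
  proof -
    have "0 \<le> integral\<^sup>L \<gamma> (\<lambda>z. g (T a b z))" by (rule integral_nonneg_AE) (simp add: g0)
    then show ?thesis using iT[OF that] by simp
  qed
  have w: "0 \<le> r" "0 \<le> p - r" "0 \<le> q - r" "0 \<le> 1 - p - q + r" using r0 rp rq rpq by auto
  have A: "ennreal (integral\<^sup>L \<gamma> f) = ennreal r * ennreal (integral\<^sup>L \<gamma> (\<lambda>z. f (T t1 t1 z))) + ennreal (p - r) * ennreal (integral\<^sup>L \<gamma> (\<lambda>z. f (T t1 t2 z)))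
     + ennreal (q - r) * ennreal (integral\<^sup>L \<gamma> (\<lambda>z. f (T t2 t1 z))) + ennreal (1 - p - q + r) * ennreal (integral\<^sup>L \<gamma> (\<lambda>z. f (T t2 t2 z)))"
    using nn unfolding n0 nT i0 iT[of t1 t1, simplified] iT[of t1 t2, simplified] iT[of t2 t1, simplified] iT[of t2 t2, simplified] .
  also have "\<dots> = ennreal (r * integral\<^sup>L \<gamma> (\<lambda>z. f (T t1 t1 z)) + (p - r) * integral\<^sup>L \<gamma> (\<lambda>z. f (T t1 t2 z))
     + (q - r) * integral\<^sup>L \<gamma> (\<lambda>z. f (T t2 t1 z)) + (1 - p - q + r) * integral\<^sup>L \<gamma> (\<lambda>z. f (T t2 t2 z)))"
    by (rule ennr4[OF w]) (auto intro: pos)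
  finally have "ennreal (integral\<^sup>L \<gamma> f) = ennreal (r * integral\<^sup>L \<gamma> (\<lambda>z. f (T t1 t1 z)) + (p - r) * integral\<^sup>L \<gamma> (\<lambda>z. f (T t1 t2 z))
     + (q - r) * integral\<^sup>L \<gamma> (\<lambda>z. f (T t2 t1 z)) + (1 - p - q + r) * integral\<^sup>L \<gamma> (\<lambda>z. f (T t2 t2 z)))" .
  moreover have "0 \<le> integral\<^sup>L \<gamma> f"
  proof -
    have "0 \<le> integral\<^sup>L \<gamma> g" by (rule integral_nonneg_AE) (simp add: g0)
    then show ?thesis using i0 by simp
  qed
  moreover have "0 \<le> r * integral\<^sup>L \<gamma> (\<lambda>z. f (T t1 t1 z)) + (p - r) * integral\<^sup>L \<gamma> (\<lambda>z. f (T t1 t2 z))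
     + (q - r) * integral\<^sup>L \<gamma> (\<lambda>z. f (T t2 t1 z)) + (1 - p - q + r) * integral\<^sup>L \<gamma> (\<lambda>z. f (T t2 t2 z))"
  proof -
    have "0 \<le> r * integral\<^sup>L \<gamma> (\<lambda>z. f (T t1 t1 z))" by (rule mult_nonneg_nonneg[OF w(1) pos]) simp_all
    moreover have "0 \<le> (p - r) * integral\<^sup>L \<gamma> (\<lambda>z. f (T t1 t2 z))" by (rule mult_nonneg_nonneg[OF w(2) pos]) simp_all
    moreover have "0 \<le> (q - r) * integral\<^sup>L \<gamma> (\<lambda>z. f (T t2 t1 z))" by (rule mult_nonneg_nonneg[OF w(3) pos]) simp_all
    moreover have "0 \<le> (1 - p - q + r) * integral\<^sup>L \<gamma> (\<lambda>z. f (T t2 t2 z))" by (rule mult_nonneg_nonneg[OF w(4) pos]) simp_all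
    ultimately show ?thesis by linarith
  qed
  ultimately show ?thesis using ennreal_inj by blast
qed


definition mX where "mX = integral\<^sup>L \<gamma> fst"
definition mY where "mY = integral\<^sup>L \<gamma> snd"
definition D where "D = integral\<^sup>L \<gamma> (\<lambda>z. (fst z - snd z)^2)"

lemma box_b: "z \<in> box \<Longrightarrow> 0 \<le> fst z \<and> fst z \<le> 1 \<and> 0 \<le> snd z \<and> snd z \<le> 1"
  by (auto simp: box_def)

lemma i_fst: "integrable \<gamma> fst" by (rule integ[where B=1], (intro borel_measurable_continuous_onI continuous_intros), auto dest: box_b)
lemma i_snd: "integrable \<gamma> snd" by (rule integ[where B=1], (intro borel_measurable_continuous_onI continuous_intros), auto dest: box_b)
lemma ic: "integrable \<gamma> (\<lambda>z. a)"
proof -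
  interpret prob_space \<gamma> by (rule ps)
  show ?thesis by simp
qed
lemma i_sq: "integrable \<gamma> (\<lambda>z. (fst z - snd z)^2)"
proof (rule integ[where B=1])
  fix z assume "z \<in> box"
  then have "\<bar>fst z - snd z\<bar> \<le> 1" using box_b by fastforce
  then show "\<bar>(fst z - snd z)^2\<bar> \<le> 1" by (simp add: abs_square_le_1)
qed (intro borel_measurable_continuous_onI continuous_intros)

lemma meas1: "measure \<gamma> (space \<gamma>) = 1"
  using prob_space.prob_space[OF ps] .

lemma meas1': "measure \<gamma> UNIV = 1" using meas1 by simp

lemma lin_fst: "integral\<^sup>L \<gamma> (\<lambda>z. c * fst z + a) = c * mX + a"
proof -
  have "integral\<^sup>L \<gamma> (\<lambda>z. c * fst z + a) = integral\<^sup>L \<gamma> (\<lambda>z. c * fst z) + integral\<^sup>L \<gamma> (\<lambda>z. a)"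
    by (rule Bochner_Integration.integral_add) (use i_fst ic in auto)
  then show ?thesis by (simp add: mX_def meas1')
qed

lemma lin_snd: "integral\<^sup>L \<gamma> (\<lambda>z. c * snd z + a) = c * mY + a"
proof -
  have "integral\<^sup>L \<gamma> (\<lambda>z. c * snd z + a) = integral\<^sup>L \<gamma> (\<lambda>z. c * snd z) + integral\<^sup>L \<gamma> (\<lambda>z. a)"
    by (rule Bochner_Integration.integral_add) (use i_snd ic in auto)
  then show ?thesis by (simp add: mY_def meas1')
qed

lemma EX_eq: "(1 - c) * mX = p * t1 + (1 - p) * t2"
proof -
  have "mX = r * integral\<^sup>L \<gamma> (\<lambda>z. fst (T t1 t1 z)) + (p - r) * integral\<^sup>L \<gamma> (\<lambda>z. fst (T t1 t2 z))
     + (q - r) * integral\<^sup>L \<gamma> (\<lambda>z. fst (T t2 t1 z)) + (1 - p - q + r) * integral\<^sup>L \<gamma> (\<lambda>z. fst (T t2 t2 z))"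
    unfolding mX_def by (rule real_eq[where B=1], (intro borel_measurable_continuous_onI continuous_intros), auto dest: box_b)
  then have "mX = r * (c * mX + t1) + (p - r) * (c * mX + t1) + (q - r) * (c * mX + t2) + (1 - p - q + r) * (c * mX + t2)"
    by (simp only: T_fst lin_fst)
  then show ?thesis by algebra
qed

lemma EY_eq: "(1 - c) * mY = q * t1 + (1 - q) * t2"
proof -
  have "mY = r * integral\<^sup>L \<gamma> (\<lambda>z. snd (T t1 t1 z)) + (p - r) * integral\<^sup>L \<gamma> (\<lambda>z. snd (T t1 t2 z))
     + (q - r) * integral\<^sup>L \<gamma> (\<lambda>z. snd (T t2 t1 z)) + (1 - p - q + r) * integral\<^sup>L \<gamma> (\<lambda>z. snd (T t2 t2 z))"
    unfolding mY_def by (rule real_eq[where B=1], (intro borel_measurable_continuous_onI continuous_intros), auto dest: box_b)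
  then have "mY = r * (c * mY + t1) + (p - r) * (c * mY + t2) + (q - r) * (c * mY + t1) + (1 - p - q + r) * (c * mY + t2)"
    by (simp only: T_snd lin_snd)
  then show ?thesis by algebra
qed

lemma sq: "integral\<^sup>L \<gamma> (\<lambda>z. (c * (fst z - snd z) + d)^2) = c^2 * D + 2*c*d*(mX - mY) + d^2"
proof -
  have e: "(\<lambda>z. (c * (fst z - snd z) + d)^2) = (\<lambda>z. (c^2 * (fst z - snd z)^2 + (2*c*d) * fst z) - (2*c*d) * snd z + d^2)"
    by (auto simp: fun_eq_iff power2_eq_square algebra_simps)
  have a1: "integrable \<gamma> (\<lambda>z. c^2 * (fst z - snd z)^2)" using i_sq by simp
  have a2: "integrable \<gamma> (\<lambda>z. (2*c*d) * fst z)" using i_fst by simp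
  have a3: "integrable \<gamma> (\<lambda>z. (2*c*d) * snd z)" using i_snd by simp
  have a4: "integrable \<gamma> (\<lambda>z. d^2)" by (rule ic)
  have a12: "integrable \<gamma> (\<lambda>z. c^2 * (fst z - snd z)^2 + (2*c*d) * fst z)" using a1 a2 by simp
  have a123: "integrable \<gamma> (\<lambda>z. (c^2 * (fst z - snd z)^2 + (2*c*d) * fst z) - (2*c*d) * snd z)" using a12 a3 by simp
  have "integral\<^sup>L \<gamma> (\<lambda>z. (c * (fst z - snd z) + d)^2) = integral\<^sup>L \<gamma> (\<lambda>z. c^2 * (fst z - snd z)^2) + integral\<^sup>L \<gamma> (\<lambda>z. (2*c*d) * fst z)
      - integral\<^sup>L \<gamma> (\<lambda>z. (2*c*d) * snd z) + integral\<^sup>L \<gamma> (\<lambda>z. d^2)"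
    unfolding e by (simp only: Bochner_Integration.integral_add[OF a123 a4] Bochner_Integration.integral_diff[OF a12 a3] Bochner_Integration.integral_add[OF a1 a2])
  then show ?thesis by (simp add: D_def mX_def mY_def meas1' algebra_simps)
qed

lemma D_eq: "D = r * (c^2 * D) + (p - r) * (c^2 * D + 2*c*(t1 - t2)*(mX - mY) + (t1 - t2)^2)
     + (q - r) * (c^2 * D + 2*c*(t2 - t1)*(mX - mY) + (t2 - t1)^2) + (1 - p - q + r) * (c^2 * D)"
proof -
  have e: "\<And>a b. (\<lambda>z. (fst (T a b z) - snd (T a b z))^2) = (\<lambda>z. (c * (fst z - snd z) + (a - b))^2)"
    by (auto simp: fun_eq_iff algebra_simps)
  have "D = r * integral\<^sup>L \<gamma> (\<lambda>z. (fst (T t1 t1 z) - snd (T t1 t1 z))^2) + (p - r) * integral\<^sup>L \<gamma> (\<lambda>z. (fst (T t1 t2 z) - snd (T t1 t2 z))^2)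
     + (q - r) * integral\<^sup>L \<gamma> (\<lambda>z. (fst (T t2 t1 z) - snd (T t2 t1 z))^2) + (1 - p - q + r) * integral\<^sup>L \<gamma> (\<lambda>z. (fst (T t2 t2 z) - snd (T t2 t2 z))^2)"
    unfolding D_def
  proof (rule real_eq[where B=1])
    fix z assume "z \<in> box"
    then have "\<bar>fst z - snd z\<bar> \<le> 1" using box_b by fastforce
    then show "0 \<le> (fst z - snd z)^2 \<and> (fst z - snd z)^2 \<le> 1" by (simp add: abs_square_le_1)
  qed (intro borel_measurable_continuous_onI continuous_intros)
  then show ?thesis unfolding e sq by simp
qed

lemma D_val: "(1 - c)^2 * (1 + c) * D = (t2 - t1)^2 * (2*c*(p - q)^2 + (1 - c)*(p + q - 2*r))"
  using D_eq EX_eq EY_eq by algebra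


lemma support: assumes A: "is_attractor c t1 t2 F" shows "AE z in \<gamma>. z \<in> F \<times> F"
proof -
  have ne: "F \<noteq> {}" and cF: "compact F" and F01: "F \<subseteq> {0..1}"
    and FF: "F = sim c t1 ` F \<union> sim c t2 ` F" using A by (auto simp: is_attractor_def)
  have clF: "closed F" using cF by (rule compact_imp_closed)
  have key: "infdist (c * x + a) F \<le> c * infdist x F" if a: "a \<in> {t1, t2}" for x a
  proof -
    obtain y where y: "y \<in> F" "infdist x F = dist x y" using infdist_attains_inf[OF clF ne] by blast
    have "sim c a y \<in> F" using a y(1) FF by blast
    then have "c * y + a \<in> F" by (simp add: sim_def)
    then have "infdist (c * x + a) F \<le> dist (c * x + a) (c * y + a)" by (rule infdist_le)
    also have "\<dots> = c * dist x y" using c0 by (simp add: dist_real_def abs_mult right_diff_distrib[symmetric])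
    finally show ?thesis using y(2) by simp
  qed
  define d where "d z = max (infdist (fst z) F) (infdist (snd z) F)" for z
  have dm: "d \<in> borel_measurable borel" unfolding d_def
    by (intro borel_measurable_continuous_onI continuous_intros)
  obtain y0 where y0: "y0 \<in> F" using ne by blast
  have y01: "0 \<le> y0" "y0 \<le> 1" using y0 F01 by auto
  have ib: "infdist x F \<le> 1" if "0 \<le> x" "x \<le> 1" for x
  proof -
    have "infdist x F \<le> dist x y0" by (rule infdist_le[OF y0])
    also have "\<dots> \<le> 1" using that y01 by (simp add: dist_real_def)
    finally show ?thesis .
  qed
  have d0: "0 \<le> d z" for z unfolding d_def by (simp add: infdist_nonneg le_max_iff_disj)
  have dB: "d z \<le> 1" if "z \<in> box" for z using box_b[OF that] ib unfolding d_def by simp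
  have dT: "d (T a b z) \<le> c * d z" if "a \<in> {t1, t2}" "b \<in> {t1, t2}" for a b z
  proof -
    have m1: "infdist (fst z) F \<le> d z" "infdist (snd z) F \<le> d z" unfolding d_def by simp_all
    have "infdist (fst (T a b z)) F \<le> c * d z"
      using order_trans[OF key[OF that(1), of "fst z"] mult_left_mono[OF m1(1)]] c0 by simp
    moreover have "infdist (snd (T a b z)) F \<le> c * d z"
      using order_trans[OF key[OF that(2), of "snd z"] mult_left_mono[OF m1(2)]] c0 by simp
    ultimately show ?thesis unfolding d_def[of "T a b z"] by simp
  qed
  have dTm: "(\<lambda>z. d (T a b z)) \<in> borel_measurable borel" for a b
    using measurable_compose[OF T_meas dm] by simp
  have iT: "integrable \<gamma> (\<lambda>z. d (T a b z))" if "a \<in> {t1, t2}" "b \<in> {t1, t2}" for a b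
    by (rule integ[where B=1, OF dTm]) (use d0 dB T_box that in auto)
  have id: "integrable \<gamma> d" by (rule integ[where B=1, OF dm]) (use d0 dB in auto)
  have icd: "integrable \<gamma> (\<lambda>z. c * d z)" using id by simp
  have le: "integral\<^sup>L \<gamma> (\<lambda>z. d (T a b z)) \<le> c * integral\<^sup>L \<gamma> d" if "a \<in> {t1, t2}" "b \<in> {t1, t2}" for a b
  proof -
    have "integral\<^sup>L \<gamma> (\<lambda>z. d (T a b z)) \<le> integral\<^sup>L \<gamma> (\<lambda>z. c * d z)"
      by (rule Bochner_Integration.integral_mono[OF iT[OF that] icd dT[OF that]])
    then show ?thesis by simp
  qed
  have E: "integral\<^sup>L \<gamma> d = r * integral\<^sup>L \<gamma> (\<lambda>z. d (T t1 t1 z)) + (p - r) * integral\<^sup>L \<gamma> (\<lambda>z. d (T t1 t2 z))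
     + (q - r) * integral\<^sup>L \<gamma> (\<lambda>z. d (T t2 t1 z)) + (1 - p - q + r) * integral\<^sup>L \<gamma> (\<lambda>z. d (T t2 t2 z))"
    by (rule real_eq[where B=1, OF dm]) (use d0 dB in auto)
  have w: "0 \<le> r" "0 \<le> p - r" "0 \<le> q - r" "0 \<le> 1 - p - q + r" using r0 rp rq rpq by auto
  let ?I = "integral\<^sup>L \<gamma> d"
  have "r * integral\<^sup>L \<gamma> (\<lambda>z. d (T t1 t1 z)) \<le> r * (c * ?I)" by (rule mult_left_mono[OF le w(1)]) simp_all
  moreover have "(p - r) * integral\<^sup>L \<gamma> (\<lambda>z. d (T t1 t2 z)) \<le> (p - r) * (c * ?I)" by (rule mult_left_mono[OF le w(2)]) simp_all
  moreover have "(q - r) * integral\<^sup>L \<gamma> (\<lambda>z. d (T t2 t1 z)) \<le> (q - r) * (c * ?I)" by (rule mult_left_mono[OF le w(3)]) simp_all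
  moreover have "(1 - p - q + r) * integral\<^sup>L \<gamma> (\<lambda>z. d (T t2 t2 z)) \<le> (1 - p - q + r) * (c * ?I)" by (rule mult_left_mono[OF le w(4)]) simp_all
  moreover have "r * (c * ?I) + (p - r) * (c * ?I) + (q - r) * (c * ?I) + (1 - p - q + r) * (c * ?I) = c * ?I"
    by algebra
  ultimately have I1: "?I \<le> c * ?I" using E by linarith
  have I0: "0 \<le> ?I" by (rule integral_nonneg_AE) (simp add: d0)
  have "?I = 0"
  proof (rule ccontr)
    assume "?I \<noteq> 0"
    then have "0 < ?I" using I0 by simp
    then have "c * ?I < 1 * ?I" using c1 by (intro mult_strict_right_mono) simp_all
    then show False using I1 by simp
  qed
  then have "AE z in \<gamma>. d z = 0" using integral_nonneg_eq_0_iff_AE[OF id] d0 by simp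
  then show ?thesis
  proof (rule AE_mp[OF _ AE_I2], intro impI)
    fix z assume "d z = 0"
    then have "infdist (fst z) F = 0" "infdist (snd z) F = 0"
      unfolding d_def using infdist_nonneg[of "fst z" F] infdist_nonneg[of "snd z" F] by (simp_all add: max_def split: if_splits)
    then show "z \<in> F \<times> F" using in_closed_iff_infdist_zero[OF clF ne] by (cases z) auto
  qed
qed
end

theorem theorem2p3:
  fixes c t1 t2 p q r :: real and F :: "real set" and \<gamma> :: "(real \<times> real) measure"
  assumes "0 < c" "c \<le> 1/2"
    and "0 \<le> t1" "t1 \<le> 1 - 2*c"
    and "t1 + c \<le> t2" "t2 \<le> 1 - c"
    and "0 < p" "p < 1" "0 < q" "q < 1" "p \<noteq> q"
    and "is_attractor c t1 t2 F"
    and "r \<in> Lambda p q"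
    and "is_gamma c t1 t2 p q r \<gamma>"
  shows "sqrt (LINT z : F \<times> F | \<gamma>. (fst z - snd z)\<^sup>2) =
    (t2 - t1) / (1 - c) * sqrt ((2*c*(p - q)\<^sup>2 + (1 - c)*(p + q - 2*r)) / (1 + c))"
proof -
  have rr: "0 < r" "r < p" "r < q" "p + q - 1 < r" using assms(13) by (auto simp: Lambda_def)
  interpret G: gs c t1 t2 p q r \<gamma>
    by unfold_locales (use assms rr in auto)
  have clF: "closed F" using assms(12) by (auto simp: is_attractor_def intro: compact_imp_closed)
  have FFm[measurable]: "F \<times> F \<in> sets borel" using clF by (intro borel_closed closed_Times)
  have sqm: "(\<lambda>z::real\<times>real. (fst z - snd z)\<^sup>2) \<in> borel_measurable borel"
    by (intro borel_measurable_continuous_onI continuous_intros)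
  have "(LINT z : F \<times> F | \<gamma>. (fst z - snd z)\<^sup>2) = integral\<^sup>L \<gamma> (\<lambda>z. (fst z - snd z)\<^sup>2)"
    unfolding set_lebesgue_integral_def
  proof (rule integral_cong_AE)
    show "(\<lambda>z. indicator (F \<times> F) z *\<^sub>R (fst z - snd z)\<^sup>2) \<in> borel_measurable \<gamma>"
      by (intro G.mg borel_measurable_scaleR borel_measurable_indicator FFm sqm)
    show "(\<lambda>z. (fst z - snd z)\<^sup>2) \<in> borel_measurable \<gamma>" by (intro G.mg sqm)
    show "AE z in \<gamma>. indicator (F \<times> F) z *\<^sub>R (fst z - snd z)\<^sup>2 = (fst z - snd z)\<^sup>2"
      using G.support[OF assms(12)] by eventually_elim simp
  qed
  also have "\<dots> = G.D" by (simp add: G.D_def)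
  finally have LD: "(LINT z : F \<times> F | \<gamma>. (fst z - snd z)\<^sup>2) = G.D" .
  have c1: "0 < 1 - c" "0 < 1 + c" using assms(1,2) by auto
  have Deq: "G.D = ((t2 - t1) / (1 - c))\<^sup>2 * ((2*c*(p - q)\<^sup>2 + (1 - c)*(p + q - 2*r)) / (1 + c))"
  proof -
    have den: "(1 - c)^2 * (1 + c) \<noteq> 0" using c1 by simp
    have "G.D = ((1 - c)^2 * (1 + c) * G.D) / ((1 - c)^2 * (1 + c))" using den by simp
    also have "\<dots> = (t2 - t1)^2 * (2*c*(p - q)\<^sup>2 + (1 - c)*(p + q - 2*r)) / ((1 - c)^2 * (1 + c))"
      by (simp only: G.D_val)
    also have "\<dots> = ((t2 - t1) / (1 - c))\<^sup>2 * ((2*c*(p - q)\<^sup>2 + (1 - c)*(p + q - 2*r)) / (1 + c))"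
      by (simp only: power_divide times_divide_times_eq)
    finally show ?thesis .
  qed
  have nn: "0 \<le> (t2 - t1) / (1 - c)" using assms(1,5) c1 by simp
  have "sqrt G.D = sqrt (((t2 - t1) / (1 - c))\<^sup>2) * sqrt ((2*c*(p - q)\<^sup>2 + (1 - c)*(p + q - 2*r)) / (1 + c))"
    unfolding Deq by (rule real_sqrt_mult)
  then show ?thesis by (simp only: LD real_sqrt_abs abs_of_nonneg[OF nn])
qed

end
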